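(* $P_{x,1}(H)=ky+k(x-1)$, and $P_{x^m,1}(H)=k(x^m-1)$ for every integer $m\neq1$.
   Context: Let $k$ be a field and $0\neq q\in k$ not a root of unity. $H=k_q[x,x^{-1},y]$ is the $k$-algebra generated by $x,x^{-1},y$ with $xx^{-1}=x^{-1}x=1$, $yx=qxy$, a Hopf algebra with $\Delta(x)=x\otimes x$, $\Delta(x^{-1})=x^{-1}\otimes x^{-1}$, $\Delta(y)=y\otimes x+1\otimes y$, $\varepsilon(x)=1$, $\varepsilon(y)=0$; $\{x^ny^m:n\in\mathbb{Z},m\in\mathbb{N}\}$ is a $k$-basis. For group-like elements $g,h$ of a coalgebra $C$, $P_{g,h}(C)=\{c\in C:\Delta(c)=c\otimes g+h\otimes c\}$. *)

theory Defs
  imports Main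
begin

text \<open>Concrete model of H = k_q[x,x^{-1},y]: an element is a finitely supported
coefficient function on the basis x^n y^m, indexed by (n,m) :: int \<times> nat.
An element of H \<otimes> H is a finitely supported function on pairs of basis indices,
the pair (p,r) standing for the basis tensor (x^p1 y^p2) \<otimes> (x^r1 y^r2).\<close>

definition supp :: "('b \<Rightarrow> 'a::zero) \<Rightarrow> 'b set" where
  "supp f = {z. f z \<noteq> 0}"

definition is_elem :: "(int \<times> nat \<Rightarrow> 'a::zero) \<Rightarrow> bool" where
  "is_elem c \<longleftrightarrow> finite (supp c)"

definition bas :: "int \<times> nat \<Rightarrow> int \<times> nat \<Rightarrow> 'a::{zero,one}" where
  "bas p = (\<lambda>z. if z = p then 1 else 0)"

text \<open>Product of basis monomials: (x^a y^b)(x^c y^d) = q^(bc) x^(a+c) y^(b+d), from yx = qxy.\<close>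
definition mon_mul :: "'a::field \<Rightarrow> int \<times> nat \<Rightarrow> int \<times> nat \<Rightarrow> 'a \<times> (int \<times> nat)" where
  "mon_mul q p r = (q powi (int (snd p) * fst r), (fst p + fst r, snd p + snd r))"

text \<open>Multiplication in the algebra H \<otimes> H ((a\<otimes>b)(c\<otimes>d) = ac \<otimes> bd), on finitely supported arguments.\<close>
definition hh_mult :: "'a::field \<Rightarrow> ((int \<times> nat) \<times> (int \<times> nat) \<Rightarrow> 'a)
    \<Rightarrow> ((int \<times> nat) \<times> (int \<times> nat) \<Rightarrow> 'a) \<Rightarrow> ((int \<times> nat) \<times> (int \<times> nat) \<Rightarrow> 'a)" where
  "hh_mult q f g = (\<lambda>(s, t). \<Sum>u\<in>supp f. \<Sum>v\<in>supp g.
      (let (e1, s') = mon_mul q (fst u) (fst v); (e2, t') = mon_mul q (snd u) (snd v)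
       in if s' = s \<and> t' = t then f u * g v * e1 * e2 else 0))"

definition hh_bas :: "int \<times> nat \<Rightarrow> int \<times> nat \<Rightarrow> (int \<times> nat) \<times> (int \<times> nat) \<Rightarrow> 'a::{zero,one}" where
  "hh_bas p r = (\<lambda>z. if z = (p, r) then 1 else 0)"

definition hh_pow :: "'a::field \<Rightarrow> ((int \<times> nat) \<times> (int \<times> nat) \<Rightarrow> 'a) \<Rightarrow> nat
    \<Rightarrow> ((int \<times> nat) \<times> (int \<times> nat) \<Rightarrow> 'a)" where
  "hh_pow q f m = (hh_mult q f ^^ m) (hh_bas (0,0) (0,0))"

text \<open>Comultiplication on basis elements, as the algebra map determined by
\<Delta>(x^{\<pm>1}) = x^{\<pm>1} \<otimes> x^{\<pm>1}, \<Delta>(y) = y \<otimes> x + 1 \<otimes> y: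
\<Delta>(x^n y^m) = (x^n \<otimes> x^n) (y \<otimes> x + 1 \<otimes> y)^m.\<close>
definition Delta_mon :: "'a::field \<Rightarrow> int \<Rightarrow> nat \<Rightarrow> ((int \<times> nat) \<times> (int \<times> nat) \<Rightarrow> 'a)" where
  "Delta_mon q n m = hh_mult q (hh_bas (n,0) (n,0))
      (hh_pow q (\<lambda>z. hh_bas (0,1) (1,0) z + hh_bas (0,0) (0,1) z) m)"

definition Delta :: "'a::field \<Rightarrow> (int \<times> nat \<Rightarrow> 'a) \<Rightarrow> ((int \<times> nat) \<times> (int \<times> nat) \<Rightarrow> 'a)" where
  "Delta q c = (\<lambda>z. \<Sum>p\<in>supp c. c p * Delta_mon q (fst p) (snd p) z)"

definition tensor :: "(int \<times> nat \<Rightarrow> 'a::field) \<Rightarrow> (int \<times> nat \<Rightarrow> 'a) \<Rightarrow> ((int \<times> nat) \<times> (int \<times> nat) \<Rightarrow> 'a)" where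
  "tensor c d = (\<lambda>(p, r). c p * d r)"

definition Pgh :: "'a::field \<Rightarrow> (int \<times> nat \<Rightarrow> 'a) \<Rightarrow> (int \<times> nat \<Rightarrow> 'a) \<Rightarrow> (int \<times> nat \<Rightarrow> 'a) set" where
  "Pgh q g h = {c. is_elem c \<and> Delta q c = (\<lambda>z. tensor c g z + tensor h c z)}"

end

theory Submission imports Defs begin

definition hbody :: "'a::field \<Rightarrow> _ \<Rightarrow> _ \<Rightarrow> _ \<Rightarrow> _ \<Rightarrow> _ \<Rightarrow> _ \<Rightarrow> 'a" where
 "hbody q f g s t u v = (if (fst (fst u) + fst (fst v), snd (fst u) + snd (fst v)) = s \<and>
    (fst (snd u) + fst (snd v), snd (snd u) + snd (snd v)) = t
   then f u * g v * q powi (int (snd (fst u)) * fst (fst v)) * q powi (int (snd (snd u)) * fst (snd v)) else 0)"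

lemma hh_mult_alt: "hh_mult q f g (s,t) = (\<Sum>u\<in>supp f. \<Sum>v\<in>supp g. hbody q f g s t u v)"
  unfolding hh_mult_def hbody_def mon_mul_def by (simp add: Let_def)

lemma hh_mult_sup:
  assumes "finite S" "finite T" "supp f \<subseteq> S" "supp g \<subseteq> T"
  shows "hh_mult q f g (s,t) = (\<Sum>u\<in>S. \<Sum>v\<in>T. hbody q f g s t u v)"
proof -
  have "(\<Sum>u\<in>supp f. \<Sum>v\<in>supp g. hbody q f g s t u v) = (\<Sum>u\<in>supp f. \<Sum>v\<in>T. hbody q f g s t u v)"
    by (intro sum.cong refl sum.mono_neutral_left assms)
       (auto simp: hbody_def supp_def)
  also have "\<dots> = (\<Sum>u\<in>S. \<Sum>v\<in>T. hbody q f g s t u v)"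
  proof (rule sum.mono_neutral_left[OF assms(1,3)])
    show "\<forall>u\<in>S - supp f. (\<Sum>v\<in>T. hbody q f g s t u v) = 0"
    proof
      fix u assume "u \<in> S - supp f"
      then have fu: "f u = 0" by (simp add: supp_def)
      have "\<And>v. hbody q f g s t u v = 0" by (simp add: hbody_def fu)
      then show "(\<Sum>v\<in>T. hbody q f g s t u v) = 0" by simp
    qed
  qed
  finally show ?thesis by (simp add: hh_mult_alt)
qed

fun beta :: "'a::field \<Rightarrow> nat \<Rightarrow> nat \<Rightarrow> 'a" where
  "beta q 0 k = (if k = 0 then 1 else 0)"
| "beta q (Suc l) k = (if k = 0 then 0 else beta q l (k - 1)) + q ^ k * beta q l k"

lemma beta_big: "l < k \<Longrightarrow> beta q l k = 0"
  by (induction l arbitrary: k) auto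

definition Pl :: "'a::field \<Rightarrow> nat \<Rightarrow> (int \<times> nat) \<times> (int \<times> nat) \<Rightarrow> 'a" where
  "Pl q l z = (case z of ((a,k),(b,j)) \<Rightarrow> if a = 0 \<and> b = int k \<and> k + j = l then beta q l k else 0)"

abbreviation Fy :: "(int \<times> nat) \<times> (int \<times> nat) \<Rightarrow> 'a::field" where
  "Fy \<equiv> (\<lambda>z. hh_bas (0,1) (1,0) z + hh_bas (0,0) (0,1) z)"

definition vv :: "nat \<Rightarrow> nat \<Rightarrow> (int \<times> nat) \<times> (int \<times> nat)" where
  "vv l i = ((0,i),(int i, l - i))"

lemma inj_vv: "inj_on (vv l) A"
  by (auto simp: inj_on_def vv_def)

lemma supp_Pl: "supp (Pl q l) \<subseteq> vv l ` {..l}"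
proof
  fix z assume "z \<in> supp (Pl q l)"
  obtain a k b j where z: "z = ((a,k),(b,j))" by (cases z) auto
  with \<open>z \<in> supp (Pl q l)\<close> have nz: "Pl q l ((a,k),(b,j)) \<noteq> 0" by (simp add: supp_def)
  from nz have "a = 0" "b = int k" "k + j = l" by (auto simp: Pl_def split: if_splits)
  then show "z \<in> vv l ` {..l}" unfolding z vv_def by (intro image_eqI[of _ _ k]) auto
qed

lemma supp_Fy: "supp (Fy :: _ \<Rightarrow> 'a::field) \<subseteq> {((0,1),(1,0)), ((0,0),(0,1))}"
  by (auto simp: supp_def hh_bas_def)

lemma sum_delta_gen:
  fixes l K :: nat
  assumes "\<And>i. i \<le> l \<Longrightarrow> f i = (if i = K then g else 0)"
  shows "(\<Sum>i\<le>l. f i) = (if K \<le> l then g else 0)"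
proof -
  have "(\<Sum>i\<le>l. f i) = (\<Sum>i\<le>l. if i = K then g else 0)" by (rule sum.cong) (auto simp: assms)
  also have "\<dots> = (if K \<le> l then g else 0)" using sum.delta[OF finite_atMost[of l], of K "\<lambda>_. g"] by simp
  finally show ?thesis .
qed

lemma c1_aux: fixes a b :: int and k j l :: nat
  assumes F: "\<not> (a = 0 \<and> b = int k \<and> k + j = Suc l)"
  shows "\<not> ((a = 0 \<and> 1 \<le> k \<and> b = int k \<and> j = l - (k - 1)) \<and> k - 1 \<le> l)"
proof
  assume H: "(a = 0 \<and> 1 \<le> k \<and> b = int k \<and> j = l - (k - 1)) \<and> k - 1 \<le> l"
  then have "k + j = Suc l" by arith
  with H F show False by blast
qed

lemma c2_aux: fixes a b :: int and k j l :: nat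
  assumes F: "\<not> (a = 0 \<and> b = int k \<and> k + j = Suc l)"
  shows "\<not> ((a = 0 \<and> b = int k \<and> j = 1 + (l - k)) \<and> k \<le> l)"
proof
  assume H: "(a = 0 \<and> b = int k \<and> j = 1 + (l - k)) \<and> k \<le> l"
  then have "k + j = Suc l" by arith
  with H F show False by blast
qed

lemma two_if_zero: fixes X Y :: "'a::field" and k l :: nat
  assumes "\<not> (C1 \<and> k - 1 \<le> l)" "\<not> (C2 \<and> k \<le> l)"
  shows "(if k - 1 \<le> l then (if C1 then X else 0) else 0) + (if k \<le> l then (if C2 then Y else 0) else 0) = 0"
  using assms by auto

lemma hh_pow_Pl: "hh_pow q (Fy :: _ \<Rightarrow> 'a::field) l = Pl q l"
proof (induction l)
  case 0
  show ?case by (auto simp: hh_pow_def Pl_def hh_bas_def fun_eq_iff)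
next
  case (Suc l)
  have e: "hh_pow q Fy (Suc l) = hh_mult q Fy (Pl q l)"
    using Suc by (simp add: hh_pow_def)
  show ?case
  proof (rule ext)
    fix z :: "(int \<times> nat) \<times> (int \<times> nat)"
    obtain a k b j where z: "z = ((a,k),(b,j))" by (cases z) auto
    let ?u1 = "((0::int,1::nat),(1::int,0::nat))" and ?u2 = "((0::int,0::nat),(0::int,1::nat))"
    have hm: "hh_mult q Fy (Pl q l) ((a,k),(b,j)) =
        (\<Sum>u\<in>{?u1,?u2}. \<Sum>v\<in>vv l ` {..l}. hbody q Fy (Pl q l) (a,k) (b,j) u v)"
      by (rule hh_mult_sup[OF _ _ supp_Fy supp_Pl]) auto
    have s1: "(\<Sum>i\<le>l. hbody q Fy (Pl q l) (a,k) (b,j) ?u1 (vv l i)) =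
       (if k - 1 \<le> l then (if a = 0 \<and> 1 \<le> k \<and> b = int k \<and> j = l - (k - 1) then beta q l (k-1) else 0) else 0)"
    proof (rule sum_delta_gen)
      fix i assume "i \<le> l"
      then have "hbody q Fy (Pl q l) (a,k) (b,j) ?u1 (vv l i) =
         (if Suc i = k \<and> a = 0 \<and> b = 1 + int i \<and> j = l - i then beta q l i else 0)"
        by (simp add: hbody_def vv_def Pl_def hh_bas_def) 
      then show "hbody q Fy (Pl q l) (a,k) (b,j) ?u1 (vv l i) = (if i = k - 1 then
          (if a = 0 \<and> 1 \<le> k \<and> b = int k \<and> j = l - (k - 1) then beta q l (k-1) else 0) else 0)"
        by (cases "i = k - 1") auto
    qed
    have s2: "(\<Sum>i\<le>l. hbody q Fy (Pl q l) (a,k) (b,j) ?u2 (vv l i)) =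
       (if k \<le> l then (if a = 0 \<and> b = int k \<and> j = 1 + (l - k) then q ^ k * beta q l k else 0) else 0)"
    proof (rule sum_delta_gen)
      fix i assume "i \<le> l"
      then have "hbody q Fy (Pl q l) (a,k) (b,j) ?u2 (vv l i) =
         (if i = k \<and> a = 0 \<and> b = int i \<and> j = Suc (l - i) then beta q l i * q powi int i else 0)"
        by (auto simp: hbody_def vv_def Pl_def hh_bas_def) 
      then show "hbody q Fy (Pl q l) (a,k) (b,j) ?u2 (vv l i) = (if i = k then
          (if a = 0 \<and> b = int k \<and> j = 1 + (l - k) then q ^ k * beta q l k else 0) else 0)"
        by (cases "i = k") (auto simp: power_int_of_nat)
    qed
    have "hh_mult q Fy (Pl q l) ((a,k),(b,j)) = 
       (if k - 1 \<le> l then (if a = 0 \<and> 1 \<le> k \<and> b = int k \<and> j = l - (k - 1) then beta q l (k-1) else 0) else 0)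
     + (if k \<le> l then (if a = 0 \<and> b = int k \<and> j = 1 + (l - k) then q ^ k * beta q l k else 0) else 0)"
    proof -
      have two: "(\<Sum>u\<in>{?u1,?u2}. G u) = G ?u1 + G ?u2" for G :: "_ \<Rightarrow> 'a" by simp
      show ?thesis unfolding hm two sum.reindex[OF inj_vv] o_def s1 s2 ..
    qed
    also have "\<dots> = Pl q (Suc l) ((a,k),(b,j))"
    proof (cases "a = 0 \<and> b = int k \<and> k + j = Suc l")
      case True
      then have a0: "a = 0" and bk: "b = int k" and jk: "j = Suc l - k" and kl: "k \<le> Suc l" by auto
      have P: "Pl q (Suc l) ((a,k),(b,j)) = (if k = 0 then 0 else beta q l (k-1)) + q ^ k * beta q l k"
        using True by (simp add: Pl_def)
      show ?thesis
      proof (cases "k = 0")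
        case True
        then show ?thesis unfolding P using a0 bk jk by simp
      next
        case False
        show ?thesis
        proof (cases "k \<le> l")
          case True
          then have e1: "k - 1 \<le> l" "j = l - (k - 1)" "j = 1 + (l - k)" "1 \<le> k"
            using jk \<open>k \<noteq> 0\<close> by auto
          show ?thesis unfolding P using a0 bk e1 True \<open>k \<noteq> 0\<close> by (simp only: if_True if_False simp_thms refl)
        next
          case False
          then have "k = Suc l" using kl by simp
          then show ?thesis unfolding P using a0 bk jk by (simp add: beta_big)
        qed
      qed
    next
      case False
      have P: "Pl q (Suc l) ((a,k),(b,j)) = 0"
        using False unfolding Pl_def by (auto simp del: beta.simps)
      show ?thesis unfolding P by (rule two_if_zero[OF c1_aux[OF False] c2_aux[OF False]])
    qed
    finally show "hh_pow q Fy (Suc l) z = Pl q (Suc l) z" using e z by simp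
  qed
qed

lemma supp_hh_bas: "supp (hh_bas p r :: _ \<Rightarrow> 'a::field) \<subseteq> {(p,r)}"
  by (auto simp: supp_def hh_bas_def)

lemma Delta_mon_eq:
  "Delta_mon q n l ((a,k),(b,j)) = (if a = n \<and> b = n + int k \<and> k + j = l then beta q l k else 0)"
proof -
  have "Delta_mon q n l ((a,k),(b,j)) = hh_mult q (hh_bas (n,0) (n,0)) (Pl q l) ((a,k),(b,j))"
    unfolding Delta_mon_def hh_pow_Pl ..
  also have "\<dots> = (\<Sum>u\<in>{((n,0),(n,0))}. \<Sum>v\<in>vv l ` {..l}. hbody q (hh_bas (n,0) (n,0)) (Pl q l) (a,k) (b,j) u v)"
    by (rule hh_mult_sup[OF _ _ supp_hh_bas supp_Pl]) auto
  also have "\<dots> = (\<Sum>i\<le>l. hbody q (hh_bas (n,0) (n,0)) (Pl q l) (a,k) (b,j) ((n,0),(n,0)) (vv l i))"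
    by (simp add: sum.reindex[OF inj_vv])
  also have "\<dots> = (if k \<le> l then (if a = n \<and> b = n + int k \<and> j = l - k then beta q l k else 0) else 0)"
  proof (rule sum_delta_gen)
    fix i assume "i \<le> l"
    then have "hbody q (hh_bas (n,0) (n,0)) (Pl q l) (a,k) (b,j) ((n,0),(n,0)) (vv l i) =
       (if i = k \<and> a = n \<and> b = n + int i \<and> j = l - i then beta q l i else 0)"
      by (auto simp: hbody_def vv_def Pl_def hh_bas_def)
    then show "hbody q (hh_bas (n,0) (n,0)) (Pl q l) (a,k) (b,j) ((n,0),(n,0)) (vv l i) =
       (if i = k then (if a = n \<and> b = n + int k \<and> j = l - k then beta q l k else 0) else 0)"
      by (cases "i = k") auto
  qed
  also have "\<dots> = (if a = n \<and> b = n + int k \<and> k + j = l then beta q l k else 0)"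
    by (cases "k \<le> l") auto
  finally show ?thesis .
qed

lemma Delta_eq:
  assumes "is_elem c"
  shows "Delta q c ((a,k),(b,j)) = (if b = a + int k then c (a, k+j) * beta q (k+j) k else 0)"
proof -
  have fin: "finite (supp c)" using assms by (simp add: is_elem_def)
  have "Delta q c ((a,k),(b,j)) = (\<Sum>p\<in>supp c. c p * Delta_mon q (fst p) (snd p) ((a,k),(b,j)))"
    by (simp add: Delta_def)
  also have "\<dots> = (\<Sum>p\<in>supp c. if p = (a, k+j) then c p * (if b = a + int k then beta q (k+j) k else 0) else 0)"
    by (rule sum.cong) (auto simp: Delta_mon_eq)
  also have "\<dots> = (if (a, k+j) \<in> supp c then c (a,k+j) * (if b = a + int k then beta q (k+j) k else 0) else 0)"
    using fin by (simp add: sum.delta)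
  also have "\<dots> = (if b = a + int k then c (a, k+j) * beta q (k+j) k else 0)"
    by (auto simp: supp_def)
  finally show ?thesis .
qed

lemma beta_0: "beta q l 0 = 1"
  by (induction l) auto

lemma beta_diag: "beta q l l = 1"
  by (induction l) (auto simp: beta_big)

lemma beta_1: "(q - 1) * beta q l 1 = q ^ l - 1"
proof (induction l)
  case 0 then show ?case by simp
next
  case (Suc l)
  have "(q - 1) * beta q (Suc l) 1 = (q - 1) + q * ((q - 1) * beta q l 1)"
    by (simp add: beta_0 algebra_simps)
  also have "\<dots> = q ^ Suc l - 1" unfolding Suc.IH by (simp add: algebra_simps)
  finally show ?case .
qed

lemma beta_1_nz:
  assumes "\<forall>n::nat. n > 0 \<longrightarrow> q ^ n \<noteq> 1" "l > 0"
  shows "beta q l 1 \<noteq> 0"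
proof
  assume "beta q l 1 = 0"
  then have "q ^ l - 1 = 0" using beta_1[of q l] by simp
  with assms show False by auto
qed

lemma Pgh_iff:
  "c \<in> Pgh q (bas (m,0)) (bas (0,0)) \<longleftrightarrow> is_elem c \<and>
     (\<forall>a k b j. (if b = a + int k then c (a, k+j) * beta q (k+j) k else 0)
        = c (a,k) * bas (m,0) (b,j) + bas (0,0) (a,k) * c (b,j))"
proof
  assume H: "c \<in> Pgh q (bas (m,0)) (bas (0,0))"
  then have el: "is_elem c" and D: "Delta q c = (\<lambda>z. tensor c (bas (m,0)) z + tensor (bas (0,0)) c z)"
    by (auto simp: Pgh_def)
  show "is_elem c \<and> (\<forall>a k b j. (if b = a + int k then c (a, k+j) * beta q (k+j) k else 0)
        = c (a,k) * bas (m,0) (b,j) + bas (0,0) (a,k) * c (b,j))"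
  proof (intro conjI allI el)
    fix a k b j
    have "Delta q c ((a,k),(b,j)) = tensor c (bas (m,0)) ((a,k),(b,j)) + tensor (bas (0,0)) c ((a,k),(b,j))"
      by (simp add: D)
    then show "(if b = a + int k then c (a, k+j) * beta q (k+j) k else 0)
        = c (a,k) * bas (m,0) (b,j) + bas (0,0) (a,k) * c (b,j)"
      by (simp add: Delta_eq[OF el] tensor_def)
  qed
next
  assume H: "is_elem c \<and> (\<forall>a k b j. (if b = a + int k then c (a, k+j) * beta q (k+j) k else 0)
        = c (a,k) * bas (m,0) (b,j) + bas (0,0) (a,k) * c (b,j))"
  then have el: "is_elem c" by simp
  have "Delta q c = (\<lambda>z. tensor c (bas (m,0)) z + tensor (bas (0,0)) c z)"
  proof (rule ext)
    fix z :: "(int \<times> nat) \<times> (int \<times> nat)"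
    obtain a k b j where z: "z = ((a,k),(b,j))" by (cases z) auto
    show "Delta q c z = tensor c (bas (m,0)) z + tensor (bas (0,0)) c z"
      using H unfolding z by (simp add: Delta_eq[OF el] tensor_def)
  qed
  with el show "c \<in> Pgh q (bas (m,0)) (bas (0,0))" by (simp add: Pgh_def)
qed

lemma charP:
  assumes q: "\<forall>n::nat. n > 0 \<longrightarrow> q ^ n \<noteq> 1"
    and P: "c \<in> Pgh q (bas (m,0)) (bas (0,0))"
  shows "c = (\<lambda>z. (if m = 1 then c (0,1) else 0) * bas (0,1) z + c (m,0) * (bas (m,0) z - bas (0,0) z))"
proof -
  have E: "\<And>a k b j. (if b = a + int k then c (a, k+j) * beta q (k+j) k else 0)
        = c (a,k) * bas (m,0) (b,j) + bas (0,0) (a,k) * c (b,j)"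
    using P unfolding Pgh_iff by blast
  have F1: "c (a,j) = 0" if "a \<noteq> 0" "j \<noteq> 0" for a j
    using E[of a a 0 j] that by (simp add: bas_def beta_0)
  have F2: "c (0,l) = 0" if "l \<ge> 2" for l
  proof -
    have "c (0,l) * beta q l 1 = 0"
      using E[of 1 0 1 "l - 1"] that by (simp add: bas_def)
    moreover have "beta q l 1 \<noteq> 0" using beta_1_nz[OF q] that by simp
    ultimately show ?thesis by simp
  qed
  have F3: "c (0,1) = 0" if "m \<noteq> 1"
    using E[of 1 0 1 0] that by (simp add: bas_def beta_diag)
  have F4: "c (a,0) = 0" if "a \<noteq> 0" "a \<noteq> m" for a
    using E[of a a 0 0] that by (simp add: bas_def)
  have F5: "c (0,0) = - c (m,0)" if "m \<noteq> 0"
    using E[of m 0 0 0] that by (simp add: bas_def eq_neg_iff_add_eq_0)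
  have F6: "c (0,0) = 0" if "m = 0"
  proof -
    have h: "c (0,0) = c (0,0) + c (0,0)"
      using E[of 0 0 0 0] that by (simp add: bas_def del: add_cancel_left_right)
    show ?thesis using h by (metis add_cancel_left_right)
  qed
  show ?thesis
  proof (rule ext)
    fix z :: "int \<times> nat"
    obtain a l where z: "z = (a,l)" by (cases z) auto
    consider "l = 0" | "l = 1" | "l \<ge> 2" by linarith
    then show "c z = (if m = 1 then c (0,1) else 0) * bas (0,1) z + c (m,0) * (bas (m,0) z - bas (0,0) z)"
    proof cases
      case 1
      then show ?thesis unfolding z
        by (cases "a = 0"; cases "m = 0"; cases "a = m") (auto simp: bas_def F4 F5 F6)
    next
      case 2
      then show ?thesis unfolding z
        by (cases "a = 0"; cases "m = 1") (auto simp: bas_def F1 F3 F3[simplified])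
    next
      case 3
      then show ?thesis unfolding z
        by (cases "a = 0") (auto simp: bas_def F1 F2)
    qed
  qed
qed

lemma inP:
  assumes Am: "m = 1 \<or> A = 0"
  shows "(\<lambda>z. A * bas (0,1) z + B * (bas (m,0) z - bas (0,0) z)) \<in> Pgh q (bas (m,0)) (bas (0,0))"
proof -
  define c where "c = (\<lambda>z. A * bas (0,1) z + B * (bas (m,0) z - bas (0,0) z))"
  have el: "is_elem c"
  proof -
    have "supp c \<subseteq> {(0,1),(m,0),(0,0)}" by (auto simp: supp_def c_def bas_def)
    then show ?thesis unfolding is_elem_def by (rule finite_subset) simp
  qed
  have cz: "c (x,y) = 0" if "y \<ge> 2" for x y using that by (simp add: c_def bas_def)
  have E: "(if b = a + int k then c (a, k+j) * beta q (k+j) k else 0)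
        = c (a,k) * bas (m,0) (b,j) + bas (0,0) (a,k) * c (b,j)" for a k b j
  proof -
    consider "k + j \<ge> 2" | "k = 1" "j = 0" | "k = 0" "j = 1" | "k = 0" "j = 0" by linarith
    then show ?thesis
    proof cases
      case 1
      then show ?thesis
        by (cases "j = 0"; cases "k = 0") (auto simp: cz bas_def)
    next
      case 2
      then show ?thesis using Am
        by (cases "a = 0"; cases "b = 1") (auto simp: c_def bas_def)
    next
      case 3
      then show ?thesis
        by (cases "a = 0"; cases "b = 0"; cases "a = b") (auto simp: c_def bas_def beta_0)
    next
      case 4
      then show ?thesis
        by (cases "a = 0"; cases "b = 0"; cases "a = b"; cases "a = m"; cases "b = m"; cases "m = 0")
           (auto simp: c_def bas_def algebra_simps)
    qed
  qed
  show ?thesis unfolding c_def[symmetric] Pgh_iff using el E by blast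
qed

theorem lemma2p6:
  fixes q :: "'a::field"
  assumes "q \<noteq> 0" and "\<forall>n::nat. n > 0 \<longrightarrow> q ^ n \<noteq> 1"
  shows "Pgh q (bas (1,0)) (bas (0,0))
           = {c. \<exists>a b. c = (\<lambda>z. a * bas (0,1) z + b * (bas (1,0) z - bas (0,0) z))}
       \<and> (\<forall>m::int. m \<noteq> 1 \<longrightarrow>
           Pgh q (bas (m,0)) (bas (0,0)) = {c. \<exists>b. c = (\<lambda>z. b * (bas (m,0) z - bas (0,0) z))})"
proof (intro conjI allI impI)
  show "Pgh q (bas (1,0)) (bas (0,0))
           = {c. \<exists>a b. c = (\<lambda>z. a * bas (0,1) z + b * (bas (1,0) z - bas (0,0) z))}"
  proof (intro equalityI subsetI)
    fix c :: "int \<times> nat \<Rightarrow> 'a" assume "c \<in> Pgh q (bas (1,0)) (bas (0,0))"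
    from charP[OF assms(2) this] show "c \<in> {c. \<exists>a b. c = (\<lambda>z. a * bas (0,1) z + b * (bas (1,0) z - bas (0,0) z))}"
      by auto
  next
    fix c :: "int \<times> nat \<Rightarrow> 'a" assume "c \<in> {c. \<exists>a b. c = (\<lambda>z. a * bas (0,1) z + b * (bas (1,0) z - bas (0,0) z))}"
    then obtain a b where c: "c = (\<lambda>z. a * bas (0,1) z + b * (bas (1,0) z - bas (0,0) z))" by auto
    show "c \<in> Pgh q (bas (1,0)) (bas (0,0))" unfolding c by (rule inP) simp
  qed
next
  fix m :: int assume m: "m \<noteq> 1"
  show "Pgh q (bas (m,0)) (bas (0,0)) = {c. \<exists>b. c = (\<lambda>z. b * (bas (m,0) z - bas (0,0) z))}"
  proof (intro equalityI subsetI)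
    fix c :: "int \<times> nat \<Rightarrow> 'a" assume "c \<in> Pgh q (bas (m,0)) (bas (0,0))"
    from charP[OF assms(2) this] m show "c \<in> {c. \<exists>b. c = (\<lambda>z. b * (bas (m,0) z - bas (0,0) z))}"
      by auto
  next
    fix c :: "int \<times> nat \<Rightarrow> 'a" assume "c \<in> {c. \<exists>b. c = (\<lambda>z. b * (bas (m,0) z - bas (0,0) z))}"
    then obtain b where c: "c = (\<lambda>z. b * (bas (m,0) z - bas (0,0) z))" by auto
    have "c = (\<lambda>z. 0 * bas (0,1) z + b * (bas (m,0) z - bas (0,0) z))" unfolding c by simp
    also have "\<dots> \<in> Pgh q (bas (m,0)) (bas (0,0))" by (rule inP) simp
    finally show "c \<in> Pgh q (bas (m,0)) (bas (0,0))" .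
  qed
qed

end
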